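(* Let $\omega$ be a nondegenerate skew-symmetric $2$-cocycle on a Leibniz algebra $(A,\circ_A)$, and define multiplications $\succ_A,\prec_A$ on $A$ by $$\omega(x\succ_A y,z)=\omega(y,x\circ_A z),\qquad \omega(x\prec_A y,z)=-\omega(x,y\circ_A z+z\circ_A y),\quad\forall x,y,z\in A.$$ Then $(A,\succ_A,\prec_A)$ is an anti-pre-Leibniz algebra (with $x\succ_A y+x\prec_A y=x\circ_A y$). Moreover, $(-\mathcal L_{\succ_A},-\mathcal R_{\prec_A},A)$ and $(\mathcal L^*_{\circ_A},-\mathcal L^*_{\circ_A}-\mathcal R^*_{\circ_A},A^* )$ are equivalent representations of $(A,\circ_A)$ (via $\omega^\natural$), and $(\mathcal L_{\circ_A},\mathcal R_{\circ_A},A)$ and $(-\mathcal L^*_{\succ_A},\mathcal L^*_{\succ_A}+\mathcal R^*_{\prec_A},A^* )$ are equivalent representations of $(A,\circ_A)$ (via $(\omega^\natural)^*$).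
   Context: All vector spaces are finite-dimensional over a field $\mathbb K$ of characteristic zero. For a multiplication $\ast$, $\mathcal L_\ast(x)y=x\ast y$, $\mathcal R_\ast(x)y=y\ast x$; for $f:A\to\mathrm{End}(V)$, $f^*:A\to\mathrm{End}(V^* )$ is $\langle f^*(x)u^*,v\rangle=-\langle u^*,f(x)v\rangle$. For a bilinear form $\omega$, $\omega^\natural:A\to A^*$ is $\langle\omega^\natural(u),v\rangle=\omega(u,v)$. A Leibniz algebra is a vector space $A$ with a multiplication $\circ_A$ satisfying $x\circ_A(y\circ_A z)=(x\circ_A y)\circ_A z+y\circ_A(x\circ_A z)$. A representation of $(A,\circ_A)$ is a triple $(l,r,V)$ with linear maps $l,r:A\to\mathrm{End}(V)$ such that for all $x,y\in A,v\in V$: $l(x\circ_A y)v=l(x)l(y)v-l(y)l(x)v$; $r(x\circ_A y)v=l(x)r(y)v-r(y)l(x)v$; $r(y)l(x)v=-r(y)r(x)v$. Two representations $(l,r,V)$, $(l',r',V')$ are equivalent if there is a linear isomorphism $\phi:V\to V'$ with $\phi l(x)=l'(x)\phi$ and $\phi r(x)=r'(x)\phi$ for all $x$. A bilinear form $\omega$ on $(A,\circ_A)$ is a $2$-cocycle if $\omega(z,x\circ_A y)=\omega(x,y\circ_A z+z\circ_A y)-\omega(y,x\circ_A z)$ for all $x,y,z$. An anti-pre-Leibniz algebra is a vector space $A$ with multiplications $\succ_A,\prec_A$ such that, with $x\circ y=x\succ_A y+x\prec_A y$, for all $x,y,z$: (AL1) $(x\circ y)\prec_A z=x\succ_A(y\circ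 z)-y\succ_A(x\circ z)$; (AL2) $(x\circ y)\succ_A z=y\succ_A(x\succ_A z)-x\succ_A(y\succ_A z)$; (AL3) $x\prec_A(y\circ z)=(y\succ_A x)\prec_A z-y\succ_A(x\prec_A z)$; (AL4) $(x\succ_A y)\prec_A z=-(y\prec_A x)\prec_A z$. *)

theory Defs
  imports Complex_Main "HOL-Library.Function_Algebras"
begin

(* A is a type 'a with scalar multiplication sA :: 'k => 'a => 'a over a field 'k.
   Multiplications and bilinear forms are curried functions. *)

definition bilinear_map :: "('k::field \<Rightarrow> 'a::ab_group_add \<Rightarrow> 'a) \<Rightarrow> ('a \<Rightarrow> 'a \<Rightarrow> 'a) \<Rightarrow> bool" where
  "bilinear_map sA m \<longleftrightarrow>
     (\<forall>x. Vector_Spaces.linear sA sA (m x)) \<and> (\<forall>y. Vector_Spaces.linear sA sA (\<lambda>x. m x y))"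

definition bilinear_form :: "('k::field \<Rightarrow> 'a::ab_group_add \<Rightarrow> 'a) \<Rightarrow> ('a \<Rightarrow> 'a \<Rightarrow> 'k) \<Rightarrow> bool" where
  "bilinear_form sA w \<longleftrightarrow>
     (\<forall>x. Vector_Spaces.linear sA (*) (w x)) \<and> (\<forall>y. Vector_Spaces.linear sA (*) (\<lambda>x. w x y))"

definition leibniz_algebra :: "('k::field \<Rightarrow> 'a::ab_group_add \<Rightarrow> 'a) \<Rightarrow> ('a \<Rightarrow> 'a \<Rightarrow> 'a) \<Rightarrow> bool" where
  "leibniz_algebra sA m \<longleftrightarrow> bilinear_map sA m \<and>
     (\<forall>x y z. m x (m y z) = m (m x y) z + m y (m x z))"

definition anti_pre_leibniz :: "('k::field \<Rightarrow> 'a::ab_group_add \<Rightarrow> 'a) \<Rightarrow> ('a \<Rightarrow> 'a \<Rightarrow> 'a) \<Rightarrow> ('a \<Rightarrow> 'a \<Rightarrow> 'a) \<Rightarrow> bool" where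
  "anti_pre_leibniz sA succ prec \<longleftrightarrow> bilinear_map sA succ \<and> bilinear_map sA prec \<and>
     (let c = (\<lambda>x y. succ x y + prec x y) in
      (\<forall>x y z. prec (c x y) z = succ x (c y z) - succ y (c x z)) \<and>
      (\<forall>x y z. succ (c x y) z = succ y (succ x z) - succ x (succ y z)) \<and>
      (\<forall>x y z. prec x (c y z) = prec (succ y x) z - succ y (prec x z)) \<and>
      (\<forall>x y z. prec (succ x y) z = - prec (prec y x) z))"

definition skew_symmetric :: "('a \<Rightarrow> 'a \<Rightarrow> 'k::field) \<Rightarrow> bool" where
  "skew_symmetric w \<longleftrightarrow> (\<forall>x y. w x y = - w y x)"

definition nondegenerate :: "('a::ab_group_add \<Rightarrow> 'a \<Rightarrow> 'k::field) \<Rightarrow> bool" where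
  "nondegenerate w \<longleftrightarrow> (\<forall>x. (\<forall>y. w x y = 0) \<longrightarrow> x = 0)"

definition two_cocycle :: "('a::ab_group_add \<Rightarrow> 'a \<Rightarrow> 'a) \<Rightarrow> ('a \<Rightarrow> 'a \<Rightarrow> 'k::field) \<Rightarrow> bool" where
  "two_cocycle m w \<longleftrightarrow>
     (\<forall>x y z. w z (m x y) = w x (m y z + m z y) - w y (m x z))"

definition dual_space :: "('k::field \<Rightarrow> 'a::ab_group_add \<Rightarrow> 'a) \<Rightarrow> ('a \<Rightarrow> 'k) set" where
  "dual_space sA = {f. Vector_Spaces.linear sA (*) f}"

definition dual_scale :: "'k::field \<Rightarrow> ('a \<Rightarrow> 'k) \<Rightarrow> ('a \<Rightarrow> 'k)" where
  "dual_scale c f = (\<lambda>v. c * f v)"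

definition dual_op :: "('a \<Rightarrow> 'a \<Rightarrow> 'a) \<Rightarrow> 'a \<Rightarrow> ('a \<Rightarrow> 'k::field) \<Rightarrow> ('a \<Rightarrow> 'k)" where
  "dual_op f x u = (\<lambda>v. - u (f x v))"

definition Lmul :: "('a \<Rightarrow> 'a \<Rightarrow> 'a) \<Rightarrow> 'a \<Rightarrow> 'a \<Rightarrow> 'a" where
  "Lmul m x y = m x y"
definition Rmul :: "('a \<Rightarrow> 'a \<Rightarrow> 'a) \<Rightarrow> 'a \<Rightarrow> 'a \<Rightarrow> 'a" where
  "Rmul m x y = m y x"

definition flat :: "('a \<Rightarrow> 'a \<Rightarrow> 'k) \<Rightarrow> 'a \<Rightarrow> ('a \<Rightarrow> 'k)" where
  "flat w u = (\<lambda>v. w u v)"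

definition linear_on ::
  "('k::field \<Rightarrow> 'v::ab_group_add \<Rightarrow> 'v) \<Rightarrow> 'v set \<Rightarrow> ('k \<Rightarrow> 'w::ab_group_add \<Rightarrow> 'w) \<Rightarrow> 'w set \<Rightarrow> ('v \<Rightarrow> 'w) \<Rightarrow> bool" where
  "linear_on sV V sW W f \<longleftrightarrow> (\<forall>v\<in>V. f v \<in> W) \<and>
     (\<forall>u\<in>V. \<forall>v\<in>V. f (u + v) = f u + f v) \<and> (\<forall>c. \<forall>v\<in>V. f (sV c v) = sW c (f v))"

definition leibniz_rep ::
  "('k::field \<Rightarrow> 'a::ab_group_add \<Rightarrow> 'a) \<Rightarrow> ('a \<Rightarrow> 'a \<Rightarrow> 'a) \<Rightarrow>
   ('k \<Rightarrow> 'v::ab_group_add \<Rightarrow> 'v) \<Rightarrow> 'v set \<Rightarrow> ('a \<Rightarrow> 'v \<Rightarrow> 'v) \<Rightarrow> ('a \<Rightarrow> 'v \<Rightarrow> 'v) \<Rightarrow> bool" where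
  "leibniz_rep sA m sV V l r \<longleftrightarrow>
     vector_space sV \<and> module.subspace sV V \<and>
     (\<forall>x. linear_on sV V sV V (l x) \<and> linear_on sV V sV V (r x)) \<and>
     (\<forall>x y. \<forall>v\<in>V. l (x + y) v = l x v + l y v \<and> r (x + y) v = r x v + r y v) \<and>
     (\<forall>c x. \<forall>v\<in>V. l (sA c x) v = sV c (l x v) \<and> r (sA c x) v = sV c (r x v)) \<and>
     (\<forall>x y. \<forall>v\<in>V. l (m x y) v = l x (l y v) - l y (l x v)) \<and>
     (\<forall>x y. \<forall>v\<in>V. r (m x y) v = l x (r y v) - r y (l x v)) \<and>
     (\<forall>x y. \<forall>v\<in>V. r y (l x v) = - r y (r x v))"

definition rep_equiv_via ::
  "('k::field \<Rightarrow> 'v::ab_group_add \<Rightarrow> 'v) \<Rightarrow> 'v set \<Rightarrow> ('a \<Rightarrow> 'v \<Rightarrow> 'v) \<Rightarrow> ('a \<Rightarrow> 'v \<Rightarrow> 'v) \<Rightarrow>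
   ('k \<Rightarrow> 'w::ab_group_add \<Rightarrow> 'w) \<Rightarrow> 'w set \<Rightarrow> ('a \<Rightarrow> 'w \<Rightarrow> 'w) \<Rightarrow> ('a \<Rightarrow> 'w \<Rightarrow> 'w) \<Rightarrow>
   ('v \<Rightarrow> 'w) \<Rightarrow> bool" where
  "rep_equiv_via sV V l r sW W l' r' phi \<longleftrightarrow>
     linear_on sV V sW W phi \<and> bij_betw phi V W \<and>
     (\<forall>x. \<forall>v\<in>V. phi (l x v) = l' x (phi v) \<and> phi (r x v) = r' x (phi v))"

end

theory Submission
  imports Defs
begin

locale tp =
  fixes sA :: "'k::field_char_0 \<Rightarrow> 'a::ab_group_add \<Rightarrow> 'a"
    and B :: "'a set"
    and circ :: "'a \<Rightarrow> 'a \<Rightarrow> 'a"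
    and w :: "'a \<Rightarrow> 'a \<Rightarrow> 'k"
    and succ prec :: "'a \<Rightarrow> 'a \<Rightarrow> 'a"
  assumes fd: "finite_dimensional_vector_space sA B"
    and leib: "leibniz_algebra sA circ"
    and bil: "bilinear_form sA w"
    and skew: "skew_symmetric w"
    and nondeg: "nondegenerate w"
    and cocyc: "two_cocycle circ w"
    and succ_def: "\<And>x y z. w (succ x y) z = w y (circ x z)"
    and prec_def: "\<And>x y z. w (prec x y) z = - w x (circ y z + circ z y)"
begin

interpretation vs: finite_dimensional_vector_space sA B by (rule fd)

lemma vsA: "vector_space sA" using fd by (simp add: finite_dimensional_vector_space_def)

lemma vsK: "vector_space ((*) :: 'k \<Rightarrow> 'k \<Rightarrow> 'k)"
  by (simp add: vector_space_def algebra_simps)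

lemma wr: "Vector_Spaces.linear sA (*) (w x)" using bil by (simp add: bilinear_form_def)
lemma wl: "Vector_Spaces.linear sA (*) (\<lambda>x. w x y)" using bil by (simp add: bilinear_form_def)
lemma cr: "Vector_Spaces.linear sA sA (circ x)" using leib by (simp add: leibniz_algebra_def bilinear_map_def)
lemma cl: "Vector_Spaces.linear sA sA (\<lambda>x. circ x y)" using leib by (simp add: leibniz_algebra_def bilinear_map_def)

lemma w_simps[simp]:
  "w x (a + b) = w x a + w x b" "w x (a - b) = w x a - w x b" "w x (- a) = - w x a"
  "w x 0 = 0" "w x (sA c a) = c * w x a"
  "w (a + b) y = w a y + w b y" "w (a - b) y = w a y - w b y" "w (- a) y = - w a y"
  "w 0 y = 0" "w (sA c a) y = c * w a y"
proof -
  interpret l1: Vector_Spaces.linear sA "(*)" "w x" by (rule wr)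
  interpret l2: Vector_Spaces.linear sA "(*)" "\<lambda>x. w x y" by (rule wl)
  show "w x (a + b) = w x a + w x b" by (rule l1.add)
  show "w x (a - b) = w x a - w x b" by (rule l1.diff)
  show "w x (- a) = - w x a" by (rule l1.neg)
  show "w x 0 = 0" by (rule l1.zero)
  show "w x (sA c a) = c * w x a" by (rule l1.scale)
  show "w (a + b) y = w a y + w b y" by (rule l2.add)
  show "w (a - b) y = w a y - w b y" by (rule l2.diff)
  show "w (- a) y = - w a y" by (rule l2.neg)
  show "w 0 y = 0" by (rule l2.zero)
  show "w (sA c a) y = c * w a y" by (rule l2.scale)
qed

lemma c_simps[simp]:
  "circ x (a + b) = circ x a + circ x b" "circ x (a - b) = circ x a - circ x b" "circ x (- a) = - circ x a"
  "circ x 0 = 0" "circ x (sA c a) = sA c (circ x a)"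
  "circ (a + b) y = circ a y + circ b y" "circ (a - b) y = circ a y - circ b y" "circ (- a) y = - circ a y"
  "circ 0 y = 0" "circ (sA c a) y = sA c (circ a y)"
proof -
  interpret l1: Vector_Spaces.linear sA sA "circ x" by (rule cr)
  interpret l2: Vector_Spaces.linear sA sA "\<lambda>x. circ x y" by (rule cl)
  show "circ x (a + b) = circ x a + circ x b" by (rule l1.add)
  show "circ x (a - b) = circ x a - circ x b" by (rule l1.diff)
  show "circ x (- a) = - circ x a" by (rule l1.neg)
  show "circ x 0 = 0" by (rule l1.zero)
  show "circ x (sA c a) = sA c (circ x a)" by (rule l1.scale)
  show "circ (a + b) y = circ a y + circ b y" by (rule l2.add)
  show "circ (a - b) y = circ a y - circ b y" by (rule l2.diff)
  show "circ (- a) y = - circ a y" by (rule l2.neg)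
  show "circ 0 y = 0" by (rule l2.zero)
  show "circ (sA c a) y = sA c (circ a y)" by (rule l2.scale)
qed

lemma eqI: assumes "\<And>t. w a t = w b t" shows "a = b"
proof -
  have "\<forall>t. w (a - b) t = 0" using assms by simp
  then have "a - b = 0" using nondeg unfolding nondegenerate_def by blast
  then show ?thesis by simp
qed

lemma sk: "w a b = - w b a" using skew unfolding skew_symmetric_def by blast
lemma coc: "w c (circ a b) = w a (circ b c) + w a (circ c b) - w b (circ a c)"
proof -
  have "w c (circ a b) = w a (circ b c + circ c b) - w b (circ a c)"
    using cocyc unfolding two_cocycle_def by blast
  then show ?thesis by simp
qed
lemma L: "circ x (circ y z) = circ (circ x y) z + circ y (circ x z)"
  using leib unfolding leibniz_algebra_def by blast
lemma L2: "circ (circ x y) z = - circ (circ y x) z"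
proof -
  have h1: "circ (circ x y) z = circ x (circ y z) - circ y (circ x z)"
    using L[of x y z] by simp
  have h2: "circ (circ y x) z = circ y (circ x z) - circ x (circ y z)"
    using L[of y x z] by simp
  have "circ (circ x y + circ y x) z = 0"
    by (simp add: h1 h2)
  then show ?thesis by (simp add: eq_neg_iff_add_eq_0)
qed

lemma succ_lin: "succ x (a + b) = succ x a + succ x b" "succ x (sA c a) = sA c (succ x a)"
  "succ (a + b) y = succ a y + succ b y" "succ (sA c a) y = sA c (succ a y)"
  by (rule eqI; simp add: succ_def algebra_simps)+

lemma prec_lin: "prec x (a + b) = prec x a + prec x b" "prec x (sA c a) = sA c (prec x a)"
  "prec (a + b) y = prec a y + prec b y" "prec (sA c a) y = sA c (prec a y)"
  by (rule eqI; simp add: prec_def algebra_simps)+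

lemma Lw: "w p (circ a (circ b c)) = w p (circ (circ a b) c) + w p (circ b (circ a c))"
  by (simp add: L[of a b c])

lemma sp: "succ x y + prec x y = circ x y"
proof (rule eqI)
  fix t
  show "w (succ x y + prec x y) t = w (circ x y) t"
    using coc[of t x y] sk[of "circ x y" t] by (simp add: succ_def prec_def)
qed

lemma AL2: "succ (circ x y) z = succ y (succ x z) - succ x (succ y z)"
  by (rule eqI) (simp add: succ_def L[of x y])

lemma AL3: "prec x (circ y z) = prec (succ y x) z - succ y (prec x z)"
proof (rule eqI)
  fix t
  show "w (prec x (circ y z)) t = w (prec (succ y x) z - succ y (prec x z)) t"
    by (simp add: succ_def prec_def L[of y z t] L[of y t z] algebra_simps)
qed

lemma AL4: "prec (succ x y) z = - prec (prec y x) z"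
proof (rule eqI)
  fix t
  have "w y (circ (circ z t) x) = - w y (circ (circ t z) x)" using L2[of z t x] by simp
  then have "w y (circ (circ z t) x) + w y (circ (circ t z) x) = 0"
    by simp
  then show "w (prec (succ x y) z) t = w (- prec (prec y x) z) t"
    by (simp add: succ_def prec_def algebra_simps)
qed

lemma AL1: "prec (circ x y) z = succ x (circ y z) - succ y (circ x z)"
proof (rule eqI)
  fix t
  note I = sk[of "(circ x y)" "(circ z t)"] sk[of "(circ x y)" "(circ t z)"] coc[of "t" "x" "(circ y z)"] sk[of "(circ x z)" "(circ y t)"] coc[of "(circ z t)" "x" "y"] coc[of "(circ t z)" "x" "y"] coc[of "z" "x" "(circ y t)"] Lw[of "x" "y" "z" "t"] Lw[of "y" "x" "z" "t"] Lw[of "x" "y" "t" "z"] Lw[of "x" "t" "z" "y"] Lw[of "x" "z" "t" "y"] Lw[of "y" "x" "t" "z"] Lw[of "z" "x" "y" "t"] coc[of "z" "y" "(circ x t)"] sk[of "(circ x t)" "(circ y z)"] Lw[of "t" "x" "y" "z"] coc[of "t" "(circ x y)" "z"] coc[of "t" "y" "(circ x z)"]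
  note I0 = I[THEN iffD2[OF right_minus_eq]]
  have e: "2 * (w (prec (circ x y) z) t - w (succ x (circ y z) - succ y (circ x z)) t) = (- (w (circ x y) (circ z t) - (- w (circ z t) (circ x y))) - (w (circ x y) (circ t z) - (- w (circ t z) (circ x y))) - (w t (circ x (circ y z)) - (w x (circ (circ y z) t) + w x (circ t (circ y z)) - w (circ y z) (circ x t))) + (w (circ x z) (circ y t) - (- w (circ y t) (circ x z))) + (w (circ z t) (circ x y) - (w x (circ y (circ z t)) + w x (circ (circ z t) y) - w y (circ x (circ z t)))) + (w (circ t z) (circ x y) - (w x (circ y (circ t z)) + w x (circ (circ t z) y) - w y (circ x (circ t z)))) - (w z (circ x (circ y t)) - (w x (circ (circ y t) z) + w x (circ z (circ y t)) - w (circ y t) (circ x z))) + (w x (circ y (circ z t)) - (w x (circ (circ y z) t) + w x (circ z (circ y t)))) - (w y (circ x (circ z t)) - (w y (circ (circ x z) t) + w y (circ z (circ x t)))) + (w x (circ y (circ t z)) - (w x (circ (circ y t) z) + w x (circ t (circ y z)))) - (w x (circ t (circ z y)) - (w x (circ (circ t z) y) + w x (circ z (circ t y)))) - (w x (circ z (circ t y)) - (w x (circ (circ z t) y) + w x (circ t (circ z y)))) - (w y (circ x (circ t z)) - (w y (circ (circ x t) z) + w y (circ t (circ x z)))) + (w z (circ x (circ y t)) - (w z (circ (circ x y) t) + w z (circ y (circ x t)))) + (w z (circ y (circ x t)) - (w y (circ (circ x t) z) + w y (circ z (circ x t)) - w (circ x t) (circ y z))) - (w (circ x t) (circ y z) -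 (- w (circ y z) (circ x t))) + (w t (circ x (circ y z)) - (w t (circ (circ x y) z) + w t (circ y (circ x z)))) + (w t (circ (circ x y) z) - (w (circ x y) (circ z t) + w (circ x y) (circ t z) - w z (circ (circ x y) t))) + (w t (circ y (circ x z)) - (w y (circ (circ x z) t) + w y (circ t (circ x z)) - w (circ x z) (circ y t))))"
    by (simp add: succ_def prec_def algebra_simps)
  have "(- (w (circ x y) (circ z t) - (- w (circ z t) (circ x y))) - (w (circ x y) (circ t z) - (- w (circ t z) (circ x y))) - (w t (circ x (circ y z)) - (w x (circ (circ y z) t) + w x (circ t (circ y z)) - w (circ y z) (circ x t))) + (w (circ x z) (circ y t) - (- w (circ y t) (circ x z))) + (w (circ z t) (circ x y) - (w x (circ y (circ z t)) + w x (circ (circ z t) y) - w y (circ x (circ z t)))) + (w (circ t z) (circ x y) - (w x (circ y (circ t z)) + w x (circ (circ t z) y) - w y (circ x (circ t z)))) - (w z (circ x (circ y t)) - (w x (circ (circ y t) z) + w x (circ z (circ y t)) - w (circ y t) (circ x z))) + (w x (circ y (circ z t)) - (w x (circ (circ y z) t) + w x (circ z (circ y t)))) - (w y (circ x (circ z t)) - (w y (circ (circ x z) t) + w y (circ z (circ x t)))) + (w x (circ y (circ t z)) - (w x (circ (circ y t) z) + w x (circ t (circ y z)))) - (w x (circ t (circ z y)) - (w x (circ (circ t z) y) + w x (circ z (circ t y)))) - (w x (circ z (circ t y)) - (w x (circ (circ z t) y) + w x (circ t (circ z y)))) - (w y (circ x (circ t z)) - (w y (circ (circ x t) z) + w y (circ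 t (circ x z)))) + (w z (circ x (circ y t)) - (w z (circ (circ x y) t) + w z (circ y (circ x t)))) + (w z (circ y (circ x t)) - (w y (circ (circ x t) z) + w y (circ z (circ x t)) - w (circ x t) (circ y z))) - (w (circ x t) (circ y z) - (- w (circ y z) (circ x t))) + (w t (circ x (circ y z)) - (w t (circ (circ x y) z) + w t (circ y (circ x z)))) + (w t (circ (circ x y) z) - (w (circ x y) (circ z t) + w (circ x y) (circ t z) - w z (circ (circ x y) t))) + (w t (circ y (circ x z)) - (w y (circ (circ x z) t) + w y (circ t (circ x z)) - w (circ x z) (circ y t)))) = 0"
    by (simp only: I0) simp
  then have "2 * (w (prec (circ x y) z) t - w (succ x (circ y z) - succ y (circ x z)) t) = 0"
    by (subst e)
  moreover have two: "(2::'k) \<noteq> 0" by simp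
  ultimately have "w (prec (circ x y) z) t - w (succ x (circ y z) - succ y (circ x z)) t = 0"
    by (simp only: mult_eq_0_iff) blast
  then show "w (prec (circ x y) z) t = w (succ x (circ y z) - succ y (circ x z)) t"
    using eq_iff_diff_eq_0 by blast
qed


lemma succ_linear: "Vector_Spaces.linear sA sA (succ x)" "Vector_Spaces.linear sA sA (\<lambda>x. succ x y)"
  by (simp_all add: Vector_Spaces.linear_iff vsA succ_lin)
lemma prec_linear: "Vector_Spaces.linear sA sA (prec x)" "Vector_Spaces.linear sA sA (\<lambda>x. prec x y)"
  by (simp_all add: Vector_Spaces.linear_iff vsA prec_lin)

lemma s_simps[simp]:
  "succ x (a + b) = succ x a + succ x b" "succ x (a - b) = succ x a - succ x b" "succ x (- a) = - succ x a"
  "succ x 0 = 0" "succ x (sA c a) = sA c (succ x a)"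
  "succ (a + b) y = succ a y + succ b y" "succ (a - b) y = succ a y - succ b y" "succ (- a) y = - succ a y"
  "succ 0 y = 0" "succ (sA c a) y = sA c (succ a y)"
proof -
  interpret l1: Vector_Spaces.linear sA sA "succ x" by (rule succ_linear)
  interpret l2: Vector_Spaces.linear sA sA "\<lambda>x. succ x y" by (rule succ_linear)
  show "succ x (a + b) = succ x a + succ x b" by (rule l1.add)
  show "succ x (a - b) = succ x a - succ x b" by (rule l1.diff)
  show "succ x (- a) = - succ x a" by (rule l1.neg)
  show "succ x 0 = 0" by (rule l1.zero)
  show "succ x (sA c a) = sA c (succ x a)" by (rule l1.scale)
  show "succ (a + b) y = succ a y + succ b y" by (rule l2.add)
  show "succ (a - b) y = succ a y - succ b y" by (rule l2.diff)
  show "succ (- a) y = - succ a y" by (rule l2.neg)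
  show "succ 0 y = 0" by (rule l2.zero)
  show "succ (sA c a) y = sA c (succ a y)" by (rule l2.scale)
qed

lemma p_simps[simp]:
  "prec x (a + b) = prec x a + prec x b" "prec x (a - b) = prec x a - prec x b" "prec x (- a) = - prec x a"
  "prec x 0 = 0" "prec x (sA c a) = sA c (prec x a)"
  "prec (a + b) y = prec a y + prec b y" "prec (a - b) y = prec a y - prec b y" "prec (- a) y = - prec a y"
  "prec 0 y = 0" "prec (sA c a) y = sA c (prec a y)"
proof -
  interpret l1: Vector_Spaces.linear sA sA "prec x" by (rule prec_linear)
  interpret l2: Vector_Spaces.linear sA sA "\<lambda>x. prec x y" by (rule prec_linear)
  show "prec x (a + b) = prec x a + prec x b" by (rule l1.add)
  show "prec x (a - b) = prec x a - prec x b" by (rule l1.diff)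
  show "prec x (- a) = - prec x a" by (rule l1.neg)
  show "prec x 0 = 0" by (rule l1.zero)
  show "prec x (sA c a) = sA c (prec x a)" by (rule l1.scale)
  show "prec (a + b) y = prec a y + prec b y" by (rule l2.add)
  show "prec (a - b) y = prec a y - prec b y" by (rule l2.diff)
  show "prec (- a) y = - prec a y" by (rule l2.neg)
  show "prec 0 y = 0" by (rule l2.zero)
  show "prec (sA c a) y = sA c (prec a y)" by (rule l2.scale)
qed

lemma C1: "anti_pre_leibniz sA succ prec"
  unfolding anti_pre_leibniz_def bilinear_map_def Let_def
  by (simp add: succ_linear prec_linear sp AL1 AL2 AL3 AL4)

lemma dual_simps:
  assumes "u \<in> dual_space sA"
  shows "u (a + b) = u a + u b" "u (a - b) = u a - u b" "u (- a) = - u a"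
    "u 0 = 0" "u (sA c a) = c * u a"
proof -
  interpret l1: Vector_Spaces.linear sA "(*)" u using assms by (simp add: dual_space_def)
  show "u (a + b) = u a + u b" by (rule l1.add)
  show "u (a - b) = u a - u b" by (rule l1.diff)
  show "u (- a) = - u a" by (rule l1.neg)
  show "u 0 = 0" by (rule l1.zero)
  show "u (sA c a) = c * u a" by (rule l1.scale)
qed

lemma dual_memI:
  assumes "\<And>a b. u (a + b) = u a + u b" "\<And>c a. u (sA c a) = c * u a"
  shows "u \<in> dual_space sA"
  using assms by (simp add: dual_space_def Vector_Spaces.linear_iff vsA vsK)

lemma vsD: "vector_space (dual_scale :: 'k \<Rightarrow> ('a \<Rightarrow> 'k) \<Rightarrow> ('a \<Rightarrow> 'k))"
  by (simp add: vector_space_def dual_scale_def fun_eq_iff algebra_simps)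

lemma subD: "module.subspace (dual_scale :: 'k \<Rightarrow> ('a \<Rightarrow> 'k) \<Rightarrow> ('a \<Rightarrow> 'k)) (dual_space sA)"
proof -
  have m: "module (dual_scale :: 'k \<Rightarrow> ('a \<Rightarrow> 'k) \<Rightarrow> ('a \<Rightarrow> 'k))"
    using vsD by (simp add: module_iff_vector_space)
  show ?thesis
    unfolding module.subspace_def[OF m]
    by (auto intro!: dual_memI simp: dual_simps dual_scale_def algebra_simps)
qed

lemma subA: "module.subspace sA UNIV" by (rule vs.subspace_UNIV)

lemma wmem: "w u \<in> dual_space sA" using wr by (simp add: dual_space_def)

lemma zero_on_basis:
  assumes "\<And>b. b \<in> B \<Longrightarrow> f b = g b" "f \<in> dual_space sA" "g \<in> dual_space sA"
  shows "f v = g v"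
proof -
  interpret vp: vector_space_pair sA "(*) :: 'k \<Rightarrow> 'k \<Rightarrow> 'k"
    by (rule vector_space_pair.intro[OF vsA vsK])
  show ?thesis
    apply (rule vp.linear_eq_on[of f g v B])
    using assms vs.span_Basis by (auto simp: dual_space_def)
qed

lemma flat_surj:
  assumes f: "f \<in> dual_space sA"
  shows "\<exists>u. \<forall>v. w u v = f v"
proof -
  define M where "M u = (\<Sum>b\<in>B. sA (w u b) b)" for u
  have indep: "finite B \<and> (\<forall>c. (\<Sum>v\<in>B. sA (c v) v) = 0 \<longrightarrow> (\<forall>v \<in> B. c v = 0))"
    using vs.independent_Basis vs.independent_explicit by blast
  have linM: "Vector_Spaces.linear sA sA M"
  proof -
    have a: "M (x + y) = M x + M y" for x y
      by (simp add: M_def vs.scale_left_distrib sum.distrib)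
    have s: "M (sA c x) = sA c (M x)" for c x
      by (simp add: M_def vs.scale_sum_right)
    show ?thesis using a s by (simp add: Vector_Spaces.linear_iff vsA)
  qed
  interpret lM: Vector_Spaces.linear sA sA M by (rule linM)
  have injM: "inj M"
  proof (rule injI)
    fix x y assume "M x = M y"
    then have "M (x - y) = 0" by (simp add: lM.diff)
    then have "(\<Sum>b\<in>B. sA (w (x - y) b) b) = 0" by (simp add: M_def)
    then have "\<forall>b\<in>B. w (x - y) b = 0" using indep by blast
    moreover have z: "(\<lambda>_. 0::'k) \<in> dual_space sA" by (rule dual_memI) simp_all
    ultimately have "\<forall>v. w (x - y) v = (\<lambda>_. 0) v"
      using zero_on_basis[of "w (x - y)" "\<lambda>_. 0"] wmem by blast
    then show "x = y" using eqI by (metis right_minus_eq w_simps(9))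
  qed
  have "surj M" by (rule vs.linear_inj_imp_surj[OF linM injM])
  then obtain u where u: "M u = (\<Sum>b\<in>B. sA (f b) b)" by (metis surjD)
  then have "(\<Sum>b\<in>B. sA (w u b - f b) b) = 0"
    by (simp add: M_def vs.scale_left_diff_distrib sum_subtractf)
  then have "\<forall>b\<in>B. w u b - f b = 0"
    using indep[THEN conjunct2, rule_format, of "\<lambda>b. w u b - f b"] by auto
  then have "\<forall>v. w u v = f v"
    using zero_on_basis[of "w u" f] wmem f by auto
  then show ?thesis by blast
qed


lemma C3: "leibniz_rep sA circ sA UNIV (\<lambda>x. - Lmul succ x) (\<lambda>x. - Rmul prec x)"
  unfolding leibniz_rep_def linear_on_def Lmul_def Rmul_def
  by (simp add: vsA subA AL2 AL3 AL4 algebra_simps)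

lemma C6: "leibniz_rep sA circ sA UNIV (Lmul circ) (Rmul circ)"
proof -
  have a: "circ (circ x y) v = circ x (circ y v) - circ y (circ x v)" for x y v using L[of x y v] by simp
  have b: "circ v (circ x y) = circ x (circ v y) - circ (circ x v) y" for x y v using L[of x v y] by simp
  show ?thesis
    unfolding leibniz_rep_def linear_on_def Lmul_def Rmul_def
    apply (intro conjI allI ballI)
    apply (rule a | rule b | rule L2 | simp add: vsA subA)+
    done
qed

lemma C4: "leibniz_rep sA circ dual_scale (dual_space sA)
        (dual_op (Lmul circ)) (\<lambda>x. - dual_op (Lmul circ) x - dual_op (Rmul circ) x)"
proof -
  have m1: "dual_op (Lmul circ) x u \<in> dual_space sA" if "u \<in> dual_space sA" for x u
    using that by (auto intro!: dual_memI simp: dual_op_def Lmul_def dual_simps)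
  have m2: "(- dual_op (Lmul circ) x - dual_op (Rmul circ) x) u \<in> dual_space sA"
    if "u \<in> dual_space sA" for x u
    using that by (auto intro!: dual_memI simp: dual_op_def Lmul_def Rmul_def dual_simps algebra_simps)
  have i1: "dual_op (Lmul circ) (circ x y) u = dual_op (Lmul circ) x (dual_op (Lmul circ) y u) - dual_op (Lmul circ) y (dual_op (Lmul circ) x u)"
    if "u \<in> dual_space sA" for x y u
  proof (rule ext)
    fix v show "dual_op (Lmul circ) (circ x y) u v = (dual_op (Lmul circ) x (dual_op (Lmul circ) y u) - dual_op (Lmul circ) y (dual_op (Lmul circ) x u)) v"
      using that by (simp add: dual_op_def Lmul_def L[of x y v] dual_simps)
  qed
  have i2: "(- dual_op (Lmul circ) (circ x y) - dual_op (Rmul circ) (circ x y)) u =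
      dual_op (Lmul circ) x ((- dual_op (Lmul circ) y - dual_op (Rmul circ) y) u) -
      (- dual_op (Lmul circ) y - dual_op (Rmul circ) y) (dual_op (Lmul circ) x u)"
    if "u \<in> dual_space sA" for x y u
  proof (rule ext)
    fix v show "((- dual_op (Lmul circ) (circ x y) - dual_op (Rmul circ) (circ x y)) u) v =
      (dual_op (Lmul circ) x ((- dual_op (Lmul circ) y - dual_op (Rmul circ) y) u) -
      (- dual_op (Lmul circ) y - dual_op (Rmul circ) y) (dual_op (Lmul circ) x u)) v"
      using that by (simp add: dual_op_def Lmul_def Rmul_def L[of x y v] L[of x v y] dual_simps algebra_simps)
  qed
  have i3: "(- dual_op (Lmul circ) y - dual_op (Rmul circ) y) (dual_op (Lmul circ) x u) =
      - (- dual_op (Lmul circ) y - dual_op (Rmul circ) y) ((- dual_op (Lmul circ) x - dual_op (Rmul circ) x) u)"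
    if "u \<in> dual_space sA" for x y u
  proof (rule ext)
    fix v
    have "u (circ (circ y v) x) = - u (circ (circ v y) x)" using that L2[of y v x] by (simp add: dual_simps)
    then show "((- dual_op (Lmul circ) y - dual_op (Rmul circ) y) (dual_op (Lmul circ) x u)) v =
      (- (- dual_op (Lmul circ) y - dual_op (Rmul circ) y) ((- dual_op (Lmul circ) x - dual_op (Rmul circ) x) u)) v"
      using that by (simp add: dual_op_def Lmul_def Rmul_def dual_simps algebra_simps)
  qed
  show ?thesis
    unfolding leibniz_rep_def linear_on_def
    apply (intro conjI allI ballI)
    apply (rule vsD)
    apply (rule subD)
    apply ((rule i1 i2 i3, assumption) | (rule m1 m2, assumption) | (auto simp: dual_op_def Lmul_def Rmul_def dual_scale_def dual_simps algebra_simps fun_eq_iff)[1])+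
    done
qed


lemma C7: "leibniz_rep sA circ dual_scale (dual_space sA)
        (\<lambda>x. - dual_op (Lmul succ) x) (\<lambda>x. dual_op (Lmul succ) x + dual_op (Rmul prec) x)"
proof -
  have m1: "(- dual_op (Lmul succ) x) u \<in> dual_space sA" if "u \<in> dual_space sA" for x u
    using that by (auto intro!: dual_memI simp: dual_op_def Lmul_def dual_simps)
  have m2: "(dual_op (Lmul succ) x + dual_op (Rmul prec) x) u \<in> dual_space sA"
    if "u \<in> dual_space sA" for x u
    using that by (auto intro!: dual_memI simp: dual_op_def Lmul_def Rmul_def dual_simps algebra_simps)
  have i1: "(- dual_op (Lmul succ) (circ x y)) u = (- dual_op (Lmul succ) x) ((- dual_op (Lmul succ) y) u) - (- dual_op (Lmul succ) y) ((- dual_op (Lmul succ) x) u)"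
    if "u \<in> dual_space sA" for x y u
  proof (rule ext)
    fix v show "((- dual_op (Lmul succ) (circ x y)) u) v = ((- dual_op (Lmul succ) x) ((- dual_op (Lmul succ) y) u) - (- dual_op (Lmul succ) y) ((- dual_op (Lmul succ) x) u)) v"
      using that by (simp add: dual_op_def Lmul_def AL2 dual_simps)
  qed
  have i2: "(dual_op (Lmul succ) (circ x y) + dual_op (Rmul prec) (circ x y)) u =
      (- dual_op (Lmul succ) x) ((dual_op (Lmul succ) y + dual_op (Rmul prec) y) u) -
      (dual_op (Lmul succ) y + dual_op (Rmul prec) y) ((- dual_op (Lmul succ) x) u)"
    if "u \<in> dual_space sA" for x y u
  proof (rule ext)
    fix v show "((dual_op (Lmul succ) (circ x y) + dual_op (Rmul prec) (circ x y)) u) v =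
      ((- dual_op (Lmul succ) x) ((dual_op (Lmul succ) y + dual_op (Rmul prec) y) u) -
      (dual_op (Lmul succ) y + dual_op (Rmul prec) y) ((- dual_op (Lmul succ) x) u)) v"
      using that by (simp add: dual_op_def Lmul_def Rmul_def AL2 AL3 dual_simps algebra_simps)
  qed
  have i3: "(dual_op (Lmul succ) y + dual_op (Rmul prec) y) ((- dual_op (Lmul succ) x) u) =
      - (dual_op (Lmul succ) y + dual_op (Rmul prec) y) ((dual_op (Lmul succ) x + dual_op (Rmul prec) x) u)"
    if "u \<in> dual_space sA" for x y u
  proof (rule ext)
    fix v
    show "((dual_op (Lmul succ) y + dual_op (Rmul prec) y) ((- dual_op (Lmul succ) x) u)) v =
      (- (dual_op (Lmul succ) y + dual_op (Rmul prec) y) ((dual_op (Lmul succ) x + dual_op (Rmul prec) x) u)) v"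
      using that by (simp add: dual_op_def Lmul_def Rmul_def AL4 dual_simps algebra_simps)
  qed
  show ?thesis
    unfolding leibniz_rep_def linear_on_def
    apply (intro conjI allI ballI)
    apply (rule vsD)
    apply (rule subD)
    apply ((rule i1 i2 i3, assumption) | (rule m1 m2, assumption) | (auto simp: dual_op_def Lmul_def Rmul_def dual_scale_def dual_simps algebra_simps fun_eq_iff)[1])+
    done
qed

lemma bij1: "bij_betw (flat w) UNIV (dual_space sA)"
  unfolding bij_betw_def
proof
  show "inj_on (flat w) UNIV"
  proof (rule inj_onI)
    fix a b assume "flat w a = flat w b"
    then have "\<And>t. w a t = w b t" by (simp add: flat_def fun_eq_iff)
    then show "a = b" by (rule eqI)
  qed
  show "flat w ` UNIV = dual_space sA"
  proof
    show "flat w ` UNIV \<subseteq> dual_space sA" using wmem by (auto simp: flat_def)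
    show "dual_space sA \<subseteq> flat w ` UNIV"
    proof
      fix f assume "f \<in> dual_space sA"
      then obtain u where "\<forall>v. w u v = f v" using flat_surj by blast
      then have "f = flat w u" by (simp add: flat_def fun_eq_iff)
      then show "f \<in> flat w ` UNIV" by blast
    qed
  qed
qed

lemma bij2: "bij_betw (\<lambda>u v. w v u) UNIV (dual_space sA)"
  unfolding bij_betw_def
proof
  show "inj_on (\<lambda>u v. w v u) UNIV"
  proof (rule inj_onI)
    fix a b assume "(\<lambda>v. w v a) = (\<lambda>v. w v b)"
    then have "\<And>t. w t a = w t b" by (simp add: fun_eq_iff)
    then have "\<And>t. w a t = w b t" by (metis sk)
    then show "a = b" by (rule eqI)
  qed
  show "(\<lambda>u v. w v u) ` UNIV = dual_space sA"
  proof
    show "(\<lambda>u v. w v u) ` UNIV \<subseteq> dual_space sA" using wl by (auto simp: dual_space_def)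
    show "dual_space sA \<subseteq> (\<lambda>u v. w v u) ` UNIV"
    proof
      fix f assume "f \<in> dual_space sA"
      then obtain u where u: "\<forall>v. w u v = f v" using flat_surj by blast
      have "\<forall>v. w v (- u) = f v"
      proof
        fix v
        have "w v u = - w u v" by (rule sk)
        then show "w v (- u) = f v" using u by simp
      qed
      then have "f = (\<lambda>v. w v (- u))" by (simp add: fun_eq_iff)
      then show "f \<in> (\<lambda>u v. w v u) ` UNIV" by blast
    qed
  qed
qed

lemma C5: "rep_equiv_via sA UNIV (\<lambda>x. - Lmul succ x) (\<lambda>x. - Rmul prec x)
        dual_scale (dual_space sA)
        (dual_op (Lmul circ)) (\<lambda>x. - dual_op (Lmul circ) x - dual_op (Rmul circ) x)
        (flat w)"
  unfolding rep_equiv_via_def linear_on_def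
  using bij1 wmem
  by (auto simp: flat_def fun_eq_iff dual_scale_def dual_op_def Lmul_def Rmul_def succ_def prec_def)

lemma C8: "rep_equiv_via sA UNIV (Lmul circ) (Rmul circ)
        dual_scale (dual_space sA)
        (\<lambda>x. - dual_op (Lmul succ) x) (\<lambda>x. dual_op (Lmul succ) x + dual_op (Rmul prec) x)
        (\<lambda>u v. w v u)"
proof -
  have m: "(\<lambda>v. w v u) \<in> dual_space sA" for u using wl by (simp add: dual_space_def)
  show ?thesis
    unfolding rep_equiv_via_def linear_on_def
    using bij2 m
    by (auto simp: fun_eq_iff dual_scale_def dual_op_def Lmul_def Rmul_def succ_def prec_def)
qed

lemma main: "anti_pre_leibniz sA succ prec
    \<and> (\<forall>x y. succ x y + prec x y = circ x y)
    \<and> leibniz_rep sA circ sA UNIV (\<lambda>x. - Lmul succ x) (\<lambda>x. - Rmul prec x)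
    \<and> leibniz_rep sA circ dual_scale (dual_space sA)
        (dual_op (Lmul circ)) (\<lambda>x. - dual_op (Lmul circ) x - dual_op (Rmul circ) x)
    \<and> rep_equiv_via sA UNIV (\<lambda>x. - Lmul succ x) (\<lambda>x. - Rmul prec x)
        dual_scale (dual_space sA)
        (dual_op (Lmul circ)) (\<lambda>x. - dual_op (Lmul circ) x - dual_op (Rmul circ) x)
        (flat w)
    \<and> leibniz_rep sA circ sA UNIV (Lmul circ) (Rmul circ)
    \<and> leibniz_rep sA circ dual_scale (dual_space sA)
        (\<lambda>x. - dual_op (Lmul succ) x) (\<lambda>x. dual_op (Lmul succ) x + dual_op (Rmul prec) x)
    \<and> rep_equiv_via sA UNIV (Lmul circ) (Rmul circ)
        dual_scale (dual_space sA)
        (\<lambda>x. - dual_op (Lmul succ) x) (\<lambda>x. dual_op (Lmul succ) x + dual_op (Rmul prec) x)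
        (\<lambda>u v. w v u)"
  using C1 sp C3 C4 C5 C6 C7 C8 by blast

end

theorem theorem2p15:
  fixes sA :: "'k::field_char_0 \<Rightarrow> 'a::ab_group_add \<Rightarrow> 'a"
    and B :: "'a set"
    and circ :: "'a \<Rightarrow> 'a \<Rightarrow> 'a"
    and w :: "'a \<Rightarrow> 'a \<Rightarrow> 'k"
    and succ prec :: "'a \<Rightarrow> 'a \<Rightarrow> 'a"
  assumes fd: "finite_dimensional_vector_space sA B"
    and leib: "leibniz_algebra sA circ"
    and bil: "bilinear_form sA w"
    and skew: "skew_symmetric w"
    and nondeg: "nondegenerate w"
    and cocyc: "two_cocycle circ w"
    and succ_def: "\<And>x y z. w (succ x y) z = w y (circ x z)"
    and prec_def: "\<And>x y z. w (prec x y) z = - w x (circ y z + circ z y)"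
  shows "anti_pre_leibniz sA succ prec
    \<and> (\<forall>x y. succ x y + prec x y = circ x y)
    \<and> leibniz_rep sA circ sA UNIV (\<lambda>x. - Lmul succ x) (\<lambda>x. - Rmul prec x)
    \<and> leibniz_rep sA circ dual_scale (dual_space sA)
        (dual_op (Lmul circ)) (\<lambda>x. - dual_op (Lmul circ) x - dual_op (Rmul circ) x)
    \<and> rep_equiv_via sA UNIV (\<lambda>x. - Lmul succ x) (\<lambda>x. - Rmul prec x)
        dual_scale (dual_space sA)
        (dual_op (Lmul circ)) (\<lambda>x. - dual_op (Lmul circ) x - dual_op (Rmul circ) x)
        (flat w)
    \<and> leibniz_rep sA circ sA UNIV (Lmul circ) (Rmul circ)
    \<and> leibniz_rep sA circ dual_scale (dual_space sA)
        (\<lambda>x. - dual_op (Lmul succ) x) (\<lambda>x. dual_op (Lmul succ) x + dual_op (Rmul prec) x)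
    \<and> rep_equiv_via sA UNIV (Lmul circ) (Rmul circ)
        dual_scale (dual_space sA)
        (\<lambda>x. - dual_op (Lmul succ) x) (\<lambda>x. dual_op (Lmul succ) x + dual_op (Rmul prec) x)
        (\<lambda>u v. w v u)"
proof -
  have "tp sA B circ w succ prec"
    by (rule tp.intro[OF fd leib bil skew nondeg cocyc succ_def prec_def])
  then show ?thesis by (rule tp.main)
qed

end
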